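(* Let $t,d \ge 1$ and let $m$ be an integer with $1 \le m \le n/d$. Let $\mathcal{G}'_{t,d}$ be the class of partially colored graphs obtained by taking a graph $G \in \mathcal{G}_{t,d}$, choosing a set of $dm$ of its $n$ vertices, and coloring these $dm$ vertices bijectively with the colors $\{1,\ldots,dm\}$ (the remaining vertices uncolored), with graphs considered up to color-preserving isomorphism. Then $$\log |\mathcal{G}'_{t,d}| \le \log |\mathcal{G}_{t,d}| + n \log n - (n-md)\log(n-md) - dm + O(\log n).$$
   Context: All logarithms are base 2. A graph $G$ on $n$ vertices has a $d$-dimensional $t$-representation if each vertex can be assigned a set of at most $t$ pairwise disjoint $d$-dimensional axis-parallel boxes (products of $d$ closed real intervals) such that distinct vertices are adjacent iff some box of one intersects some box of the other. $\mathcal{G}_{t,d}$ is the class of unlabeled $n$-vertex graphs having such a representation. *)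

theory Defs
  imports Main "HOL-Library.Log_Nat" Complex_Main
begin

text \<open>A d-dimensional axis-parallel box is given by its lower and upper corner
  (only coordinates i < d matter); it is the product of the closed intervals
  [lo i, hi i], which are required to be nonempty (lo i \<le> hi i).\<close>

type_synonym box = "(nat \<Rightarrow> real) \<times> (nat \<Rightarrow> real)"

definition valid_box :: "nat \<Rightarrow> box \<Rightarrow> bool" where
  "valid_box d b \<longleftrightarrow> (\<forall>i<d. fst b i \<le> snd b i)"

definition box_set :: "nat \<Rightarrow> box \<Rightarrow> (nat \<Rightarrow> real) set" where
  "box_set d b = {x. \<forall>i<d. fst b i \<le> x i \<and> x i \<le> snd b i}"

definition simple_graph :: "nat \<Rightarrow> (nat \<times> nat) set \<Rightarrow> bool" where
  "simple_graph n E \<longleftrightarrow> E \<subseteq> {0..<n} \<times> {0..<n} \<and>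
     (\<forall>(a, b) \<in> E. a \<noteq> b \<and> (b, a) \<in> E)"

definition has_box_rep :: "nat \<Rightarrow> nat \<Rightarrow> nat \<Rightarrow> (nat \<times> nat) set \<Rightarrow> bool" where
  "has_box_rep t d n E \<longleftrightarrow>
     (\<exists>R :: nat \<Rightarrow> box set.
        (\<forall>v<n. finite (R v) \<and> card (R v) \<le> t
               \<and> (\<forall>b\<in>R v. valid_box d b)
               \<and> (\<forall>b\<in>R v. \<forall>b'\<in>R v. b \<noteq> b' \<longrightarrow> box_set d b \<inter> box_set d b' = {}))
      \<and> (\<forall>u<n. \<forall>v<n. u \<noteq> v \<longrightarrow>
            ((u, v) \<in> E \<longleftrightarrow> (\<exists>b\<in>R u. \<exists>b'\<in>R v. box_set d b \<inter> box_set d b' \<noteq> {}))))"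

definition labeled_class :: "nat \<Rightarrow> nat \<Rightarrow> nat \<Rightarrow> (nat \<times> nat) set set" where
  "labeled_class t d n = {E. simple_graph n E \<and> has_box_rep t d n E}"

definition graph_iso :: "nat \<Rightarrow> (nat \<times> nat) set \<Rightarrow> (nat \<times> nat) set \<Rightarrow> bool" where
  "graph_iso n E E' \<longleftrightarrow>
     (\<exists>\<pi>. bij_betw \<pi> {0..<n} {0..<n} \<and> E' = (\<lambda>(a, b). (\<pi> a, \<pi> b)) ` E)"

definition num_classes :: "('a \<Rightarrow> 'a \<Rightarrow> bool) \<Rightarrow> 'a set \<Rightarrow> nat" where
  "num_classes R A = card {{y \<in> A. R x y} | x. x \<in> A}"

definition G_count :: "nat \<Rightarrow> nat \<Rightarrow> nat \<Rightarrow> nat" where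
  "G_count t d n = num_classes (graph_iso n) (labeled_class t d n)"

definition partial_coloring :: "nat \<Rightarrow> nat \<Rightarrow> (nat \<Rightarrow> nat option) \<Rightarrow> bool" where
  "partial_coloring n k c \<longleftrightarrow> dom c \<subseteq> {0..<n} \<and> inj_on c (dom c) \<and> ran c = {1..k}"

definition colored_class ::
  "nat \<Rightarrow> nat \<Rightarrow> nat \<Rightarrow> nat \<Rightarrow> ((nat \<times> nat) set \<times> (nat \<Rightarrow> nat option)) set" where
  "colored_class t d n k = {(E, c). E \<in> labeled_class t d n \<and> partial_coloring n k c}"

definition colored_iso :: "nat \<Rightarrow> ((nat \<times> nat) set \<times> (nat \<Rightarrow> nat option))
     \<Rightarrow> ((nat \<times> nat) set \<times> (nat \<Rightarrow> nat option)) \<Rightarrow> bool" where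
  "colored_iso n G G' \<longleftrightarrow>
     (\<exists>\<pi>. bij_betw \<pi> {0..<n} {0..<n}
          \<and> fst G' = (\<lambda>(a, b). (\<pi> a, \<pi> b)) ` fst G
          \<and> (\<forall>v\<in>{0..<n}. snd G' (\<pi> v) = snd G v))"

definition G'_count :: "nat \<Rightarrow> nat \<Rightarrow> nat \<Rightarrow> nat \<Rightarrow> nat" where
  "G'_count t d n k = num_classes (colored_iso n) (colored_class t d n k)"

end

theory Submission
  imports Defs
begin


lemma sum_ln_bound:
  assumes "1 \<le> a" "a \<le> n"
  shows "(\<Sum>j\<in>{Suc a..n}. ln (real j)) \<le> real n * ln n - real a * ln a - (real n - real a) + ln n - ln a"
  using assms(2)
proof (induction n rule: dec_induct)
  case base
  then show ?case by simp
next
  case (step n)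
  have n1: "real n \<ge> 1" using step assms by simp
  have "ln (real n / (real n + 1)) \<le> real n / (real n + 1) - 1"
    using n1 by (intro ln_le_minus_one) auto
  also have "\<dots> = - 1 / (real n + 1)" using n1 by (simp add: field_simps)
  finally have "ln (real n) - ln (real n + 1) \<le> - 1 / (real n + 1)"
    using n1 by (simp add: ln_div)
  hence "(real n + 1) * (ln (real n) - ln (real n + 1)) \<le> -1"
    using n1 by (simp add: field_simps)
  hence key: "1 \<le> (real n + 1) * ln (real n + 1) - real n * ln (real n) - ln (real n)"
    by (simp add: algebra_simps)
  have "{Suc a..Suc n} = insert (Suc n) {Suc a..n}" using step by auto
  hence "(\<Sum>j\<in>{Suc a..Suc n}. ln (real j)) = ln (real n + 1) + (\<Sum>j\<in>{Suc a..n}. ln (real j))"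
    by simp
  then show ?case using step.IH key by (simp add: algebra_simps)
qed

lemma ln_F_bound:
  assumes "1 \<le> k" "k \<le> n"
  shows "ln (real (\<Prod>{n - k + 1..n})) \<le> real n * ln n - (real n - real k) * ln (real n - real k) - real k + ln n + 1"
proof -
  have pos: "\<And>j. j \<in> {n - k + 1..n} \<Longrightarrow> 0 < real j" by auto
  have "ln (real (\<Prod>{n - k + 1..n})) = (\<Sum>j\<in>{n - k + 1..n}. ln (real j))"
    using pos by (simp add: of_nat_prod, intro ln_prod) auto
  also have "\<dots> \<le> real n * ln n - (real n - real k) * ln (real n - real k) - real k + ln n + 1"
  proof (cases "k < n")
    case True
    have "(\<Sum>j\<in>{n - k + 1..n}. ln (real j)) = (\<Sum>j\<in>{Suc (n-k)..n}. ln (real j))" by simp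
    also have "\<dots> \<le> real n * ln n - real (n-k) * ln (real (n-k)) - (real n - real (n-k)) + ln n - ln (real (n-k))"
      using True by (intro sum_ln_bound) auto
    also have "\<dots> \<le> real n * ln n - (real n - real k) * ln (real n - real k) - real k + ln n + 1"
    proof -
      have "real n - real k \<ge> 1" using True by simp
      hence L: "ln (real n - real k) \<ge> 0" by simp
      have eq: "real (n-k) = real n - real k" using True by (simp add: of_nat_diff)
      show ?thesis unfolding eq using L by linarith
    qed
    finally show ?thesis .
  next
    case False
    hence kn: "k = n" using assms by simp
    have "{n - k + 1..n} = insert 1 {Suc 1..n}" using kn assms by auto
    hence "(\<Sum>j\<in>{n - k + 1..n}. ln (real j)) = (\<Sum>j\<in>{Suc 1..n}. ln (real j))" by simp
    also have "\<dots> \<le> real n * ln n - real (1::nat) * ln (real (1::nat)) - (real n - real (1::nat)) + ln n - ln (real (1::nat))"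
      using assms kn by (intro sum_ln_bound) auto
    also have "\<dots> \<le> real n * ln n - (real n - real k) * ln (real n - real k) - real k + ln n + 1"
      using kn by simp
    finally show ?thesis .
  qed
  finally show ?thesis .
qed



lemma pc_some:
  assumes "partial_coloring n k c" "j \<in> {1..k}"
  shows "c (SOME v. c v = Some j) = Some j" "(SOME v. c v = Some j) < n"
proof -
  have "j \<in> ran c" using assms unfolding partial_coloring_def by auto
  then obtain v where "c v = Some j" unfolding ran_def by auto
  thus *: "c (SOME v. c v = Some j) = Some j" by (rule someI)
  hence "(SOME v. c v = Some j) \<in> dom c" by auto
  thus "(SOME v. c v = Some j) < n" using assms unfolding partial_coloring_def by auto
qed

lemma pc_card:
  assumes "k \<le> n"
  shows "finite {c. partial_coloring n k c} \<and> card {c. partial_coloring n k c} \<le> \<Prod>{n - k + 1..n}"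
proof -
  define g where "g c = map (\<lambda>j. SOME v. c v = Some j) [1..<Suc k]" for c :: "nat \<Rightarrow> nat option"
  let ?P = "{c. partial_coloring n k c}"
  let ?L = "{xs. length xs = k \<and> distinct xs \<and> set xs \<subseteq> {0..<n}}"
  have img: "g ` ?P \<subseteq> ?L"
  proof
    fix xs assume "xs \<in> g ` ?P"
    then obtain c where c: "partial_coloring n k c" and xs: "xs = g c" by auto
    have "inj_on (\<lambda>j. SOME v. c v = Some j) (set [1..<Suc k])"
    proof (rule inj_onI)
      fix i j assume ij: "i \<in> set [1..<Suc k]" "j \<in> set [1..<Suc k]"
        and e: "(SOME v. c v = Some i) = (SOME v. c v = Some j)"
      have i: "i \<in> {1..k}" and j: "j \<in> {1..k}" using ij by auto
      have "Some i = c (SOME v. c v = Some i)" using pc_some(1)[OF c i] by (rule sym)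
      also have "\<dots> = c (SOME v. c v = Some j)" using e by (rule arg_cong)
      also have "\<dots> = Some j" using pc_some(1)[OF c j] .
      finally have "Some i = Some j" .
      thus "i = j" by simp
    qed
    hence "distinct xs" unfolding xs g_def distinct_map by simp
    moreover have "set xs \<subseteq> {0..<n}"
    proof
      fix v assume "v \<in> set xs"
      then obtain j where jj0: "j \<in> set [1..<Suc k]" and vj: "v = (SOME v. c v = Some j)"
        unfolding xs g_def set_map by blast
      have jj: "j \<in> {1..k}" using jj0 by auto
      show "v \<in> {0..<n}" using pc_some(2)[OF c jj] unfolding vj by simp
    qed
    moreover have "length xs = k" unfolding xs g_def by simp
    ultimately show "xs \<in> ?L" by simp
  qed
  have inj: "inj_on g ?P"
  proof (rule inj_onI)
    fix c1 c2 assume c1: "c1 \<in> ?P" and c2: "c2 \<in> ?P" and e: "g c1 = g c2"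
    have sj: "(SOME v. c1 v = Some j) = (SOME v. c2 v = Some j)" if "j \<in> {1..k}" for j
    proof -
      have gn: "g c ! (j - 1) = (SOME v. c v = Some j)" for c
      proof -
        have "j - 1 < Suc k - 1" using that by auto
        hence "g c ! (j - 1) = (\<lambda>j. SOME v. c v = Some j) (1 + (j - 1))"
          unfolding g_def by (rule nth_map_upt)
        thus ?thesis using that by simp
      qed
      have "g c1 ! (j - 1) = g c2 ! (j - 1)" using e by simp
      thus ?thesis unfolding gn .
    qed
    have half: "ca v = Some j \<Longrightarrow> cb v = Some j"
      if ca: "ca \<in> ?P" and cb: "cb \<in> ?P"
        and s: "\<And>j. j \<in> {1..k} \<Longrightarrow> (SOME v. ca v = Some j) = (SOME v. cb v = Some j)"
      for ca cb v j
    proof -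
      assume cv: "ca v = Some j"
      have pa: "partial_coloring n k ca" and pb: "partial_coloring n k cb" using ca cb by auto
      have j: "j \<in> {1..k}" using pa cv unfolding partial_coloring_def ran_def by blast
      have "ca (SOME v. ca v = Some j) = Some j" by (rule pc_some(1)[OF pa j])
      moreover have "inj_on ca (dom ca)" using pa unfolding partial_coloring_def by auto
      ultimately have "(SOME v. ca v = Some j) = v" using cv unfolding inj_on_def by (metis domI)
      thus ?thesis using pc_some(1)[OF pb j] s[OF j] by simp
    qed
    show "c1 = c2"
    proof
      fix v
      show "c1 v = c2 v"
      proof (cases "c1 v")
        case None
        show ?thesis
        proof (cases "c2 v")
          case None thus ?thesis using \<open>c1 v = None\<close> by simp
        next
          case (Some j)
          hence "c1 v = Some j" using half[OF c2 c1] sj by metis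
          thus ?thesis using \<open>c1 v = None\<close> by simp
        qed
      next
        case (Some j)
        thus ?thesis using half[OF c1 c2] sj by metis
      qed
    qed
  qed
  have finL: "finite ?L"
    by (rule finite_subset[of _ "{xs. set xs \<subseteq> {0..<n} \<and> length xs = k}"])
       (auto intro: finite_lists_length_eq)
  have "finite ?P" using finite_imageD[OF finite_subset[OF img finL] inj] .
  moreover have "card ?P \<le> card ?L" using card_inj_on_le[OF inj img finL] .
  moreover have "card ?L = \<Prod>{n - k + 1..n}"
    using card_lists_distinct_length_eq[of "{0..<n}" k] assms by simp
  ultimately show ?thesis by simp
qed



lemma colored_iso_sym:
  assumes G: "G \<in> colored_class t d n k" and iso: "colored_iso n G G'"
  shows "colored_iso n G' G"
proof -
  obtain \<pi> where b: "bij_betw \<pi> {0..<n} {0..<n}"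
    and e: "fst G' = (\<lambda>(a, b). (\<pi> a, \<pi> b)) ` fst G"
    and c: "\<forall>v\<in>{0..<n}. snd G' (\<pi> v) = snd G v"
    using iso unfolding colored_iso_def by blast
  define \<rho> where "\<rho> = inv_into {0..<n} \<pi>"
  have b': "bij_betw \<rho> {0..<n} {0..<n}" unfolding \<rho>_def by (rule bij_betw_inv_into[OF b])
  have inj: "inj_on \<pi> {0..<n}" using b by (simp add: bij_betw_def)
  have rp: "\<rho> (\<pi> a) = a" if "a \<in> {0..<n}" for a
    unfolding \<rho>_def using inv_into_f_f[OF inj that] .
  have pr: "\<pi> (\<rho> w) = w" if "w \<in> {0..<n}" for w
  proof -
    have "w \<in> \<pi> ` {0..<n}" using b that by (simp add: bij_betw_def)
    thus ?thesis unfolding \<rho>_def by (rule f_inv_into_f)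
  qed
  have sub: "fst G \<subseteq> {0..<n} \<times> {0..<n}"
    using G unfolding colored_class_def labeled_class_def simple_graph_def by auto
  have "(\<lambda>(a, b). (\<rho> a, \<rho> b)) ` fst G' = fst G"
  proof -
    have "(\<lambda>(a, b). (\<rho> a, \<rho> b)) ` fst G' = (\<lambda>x. (\<lambda>(a, b). (\<rho> a, \<rho> b)) ((\<lambda>(a, b). (\<pi> a, \<pi> b)) x)) ` fst G"
      unfolding e image_image ..
    also have "\<dots> = (\<lambda>x. x) ` fst G"
    proof (rule image_cong[OF refl])
      fix x assume "x \<in> fst G"
      hence "fst x \<in> {0..<n}" "snd x \<in> {0..<n}" using sub by auto
      thus "(\<lambda>(a, b). (\<rho> a, \<rho> b)) ((\<lambda>(a, b). (\<pi> a, \<pi> b)) x) = x"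
        using rp by (cases x) auto
    qed
    finally show ?thesis by simp
  qed
  moreover have "\<forall>w\<in>{0..<n}. snd G (\<rho> w) = snd G' w"
  proof
    fix w assume w: "w \<in> {0..<n}"
    have "\<rho> w \<in> {0..<n}" using b' w by (rule bij_betw_apply)
    hence "snd G' (\<pi> (\<rho> w)) = snd G (\<rho> w)" using c by blast
    thus "snd G (\<rho> w) = snd G' w" using pr[OF w] by simp
  qed
  ultimately show ?thesis unfolding colored_iso_def using b' by metis
qed

lemma colored_iso_trans:
  assumes "colored_iso n G1 G2" "colored_iso n G2 G3"
  shows "colored_iso n G1 G3"
proof -
  obtain \<pi> where b: "bij_betw \<pi> {0..<n} {0..<n}"
    and e: "fst G2 = (\<lambda>(a, b). (\<pi> a, \<pi> b)) ` fst G1"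
    and c: "\<forall>v\<in>{0..<n}. snd G2 (\<pi> v) = snd G1 v"
    using assms(1) unfolding colored_iso_def by blast
  obtain \<sigma> where b2: "bij_betw \<sigma> {0..<n} {0..<n}"
    and e2: "fst G3 = (\<lambda>(a, b). (\<sigma> a, \<sigma> b)) ` fst G2"
    and c2: "\<forall>v\<in>{0..<n}. snd G3 (\<sigma> v) = snd G2 v"
    using assms(2) unfolding colored_iso_def by blast
  have "bij_betw (\<sigma> \<circ> \<pi>) {0..<n} {0..<n}" using b b2 by (rule bij_betw_trans)
  moreover have "fst G3 = (\<lambda>(a, b). ((\<sigma> \<circ> \<pi>) a, (\<sigma> \<circ> \<pi>) b)) ` fst G1"
    unfolding e2 e image_image by (rule image_cong) auto
  moreover have "\<forall>v\<in>{0..<n}. snd G3 ((\<sigma> \<circ> \<pi>) v) = snd G1 v"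
  proof
    fix v assume v: "v \<in> {0..<n}"
    have "\<pi> v \<in> {0..<n}" using b v by (rule bij_betw_apply)
    thus "snd G3 ((\<sigma> \<circ> \<pi>) v) = snd G1 v" using c2 c v by simp
  qed
  ultimately show ?thesis unfolding colored_iso_def by blast
qed

lemma class_eq:
  assumes x: "x \<in> colored_class t d n k" and x': "x' \<in> colored_class t d n k"
    and r: "colored_iso n x x'"
  shows "{y \<in> colored_class t d n k. colored_iso n x y} = {y \<in> colored_class t d n k. colored_iso n x' y}"
proof -
  have r': "colored_iso n x' x" using colored_iso_sym[OF x r] .
  show ?thesis using colored_iso_trans[OF r] colored_iso_trans[OF r'] by blast
qed

lemma empty_in_LC: "{} \<in> labeled_class t d n"
  unfolding labeled_class_def simple_graph_def has_box_rep_def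
  by (auto intro: exI[of _ "\<lambda>_. {}"])

lemma graph_iso_refl: "graph_iso n E E"
  unfolding graph_iso_def by (rule exI[of _ id]) (auto simp: case_prod_unfold)

lemma finite_Q: "finite {{y \<in> labeled_class t d n. graph_iso n x y} | x. x \<in> labeled_class t d n}"
proof -
  have "labeled_class t d n \<subseteq> Pow ({0..<n} \<times> {0..<n})"
    unfolding labeled_class_def simple_graph_def by auto
  hence fin: "finite (labeled_class t d n)" by (rule finite_subset) auto
  have "{{y \<in> labeled_class t d n. graph_iso n x y} | x. x \<in> labeled_class t d n} \<subseteq> Pow (labeled_class t d n)"
    by auto
  thus ?thesis using fin by (rule finite_subset[OF _ finite_Pow_iff[THEN iffD2]])
qed

lemma G_count_pos: "G_count t d n \<ge> 1"
proof -
  have "{y \<in> labeled_class t d n. graph_iso n {} y} \<in> {{y \<in> labeled_class t d n. graph_iso n x y} | x. x \<in> labeled_class t d n}"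
    using empty_in_LC by blast
  hence "{{y \<in> labeled_class t d n. graph_iso n x y} | x. x \<in> labeled_class t d n} \<noteq> {}" by blast
  thus ?thesis using finite_Q unfolding G_count_def num_classes_def
    by (simp add: Suc_le_eq card_gt_0_iff)
qed

lemma count_bound:
  assumes finP: "finite {c. partial_coloring n k c}"
  shows "G'_count t d n k \<le> G_count t d n * card {c. partial_coloring n k c}"
proof -
  let ?LC = "labeled_class t d n"
  let ?A = "colored_class t d n k"
  let ?Q = "{{y \<in> ?LC. graph_iso n x y} | x. x \<in> ?LC}"
  let ?Q' = "{{y \<in> ?A. colored_iso n x y} | x. x \<in> ?A}"
  let ?P = "{c. partial_coloring n k c}"
  define r where "r Y = (SOME y. y \<in> Y)" for Y :: "(nat \<times> nat) set set"
  define g where "g YC = {y \<in> ?A. colored_iso n (r (fst YC), snd YC) y}"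
    for YC :: "(nat \<times> nat) set set \<times> (nat \<Rightarrow> nat option)"
  have "?Q' \<subseteq> g ` (?Q \<times> ?P)"
  proof
    fix X assume "X \<in> ?Q'"
    then obtain E c where Ec: "(E, c) \<in> ?A" and X: "X = {y \<in> ?A. colored_iso n (E, c) y}" by auto
    have E: "E \<in> ?LC" and pc: "partial_coloring n k c" using Ec unfolding colored_class_def by auto
    define Y where "Y = {y \<in> ?LC. graph_iso n E y}"
    have "E \<in> Y" unfolding Y_def using E graph_iso_refl by blast
    hence "r Y \<in> Y" unfolding r_def by (rule someI)
    hence rY: "r Y \<in> ?LC" "graph_iso n E (r Y)" unfolding Y_def by auto
    then obtain \<pi> where b: "bij_betw \<pi> {0..<n} {0..<n}" and e: "r Y = (\<lambda>(a, b). (\<pi> a, \<pi> b)) ` E"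
      unfolding graph_iso_def by blast
    define \<rho> where "\<rho> = inv_into {0..<n} \<pi>"
    have b': "bij_betw \<rho> {0..<n} {0..<n}" unfolding \<rho>_def by (rule bij_betw_inv_into[OF b])
    have inj: "inj_on \<pi> {0..<n}" using b by (simp add: bij_betw_def)
    have rp: "\<rho> (\<pi> a) = a" if "a \<in> {0..<n}" for a
      unfolding \<rho>_def using inv_into_f_f[OF inj that] .
    define c' where "c' v = (if v < n then c (\<rho> v) else None)" for v
    have iso: "colored_iso n (E, c) (r Y, c')"
      unfolding colored_iso_def
    proof (intro exI conjI)
      show "bij_betw \<pi> {0..<n} {0..<n}" by (rule b)
      show "fst (r Y, c') = (\<lambda>(a, b). (\<pi> a, \<pi> b)) ` fst (E, c)" using e by simp
      show "\<forall>v\<in>{0..<n}. snd (r Y, c') (\<pi> v) = snd (E, c) v"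
      proof
        fix v assume v: "v \<in> {0..<n}"
        have "\<pi> v \<in> {0..<n}" using b v by (rule bij_betw_apply)
        thus "snd (r Y, c') (\<pi> v) = snd (E, c) v" using rp[OF v] unfolding c'_def by simp
      qed
    qed
    have domc: "dom c \<subseteq> {0..<n}" and injc: "inj_on c (dom c)" and ranc: "ran c = {1..k}"
      using pc unfolding partial_coloring_def by auto
    have injr: "inj_on \<rho> {0..<n}" using b' by (simp add: bij_betw_def)
    have pc': "partial_coloring n k c'"
      unfolding partial_coloring_def
    proof (intro conjI)
      show "dom c' \<subseteq> {0..<n}" unfolding c'_def dom_def by auto
      show "inj_on c' (dom c')"
      proof (rule inj_onI)
        fix v1 v2 assume d1: "v1 \<in> dom c'" and d2: "v2 \<in> dom c'" and eq: "c' v1 = c' v2"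
        have n1: "v1 < n" and n2: "v2 < n" using d1 d2 unfolding c'_def dom_def by (auto split: if_splits)
        have "\<rho> v1 \<in> dom c" "\<rho> v2 \<in> dom c" using d1 d2 n1 n2 unfolding c'_def dom_def by auto
        moreover have "c (\<rho> v1) = c (\<rho> v2)" using eq n1 n2 unfolding c'_def by simp
        ultimately have "\<rho> v1 = \<rho> v2" using injc unfolding inj_on_def by blast
        thus "v1 = v2" using injr n1 n2 unfolding inj_on_def by simp
      qed
      have "ran c' = ran c"
      proof
        show "ran c' \<subseteq> ran c" unfolding ran_def c'_def by (auto split: if_splits)
        show "ran c \<subseteq> ran c'"
        proof
          fix j assume "j \<in> ran c"
          then obtain u where u: "c u = Some j" unfolding ran_def by auto
          hence un: "u \<in> {0..<n}" using domc by auto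
          have "\<pi> u \<in> {0..<n}" by (rule bij_betw_apply[OF b un])
          hence "c' (\<pi> u) = Some j" unfolding c'_def using rp[OF un] u by simp
          thus "j \<in> ran c'" unfolding ran_def by auto
        qed
      qed
      thus "ran c' = {1..k}" using ranc by simp
    qed
    have inA: "(r Y, c') \<in> ?A" unfolding colored_class_def using rY(1) pc' by simp
    have "X = g (Y, c')" unfolding X g_def using class_eq[OF Ec inA iso] by simp
    moreover have "Y \<in> ?Q" unfolding Y_def using E by blast
    ultimately show "X \<in> g ` (?Q \<times> ?P)" using pc' by blast
  qed
  hence "card ?Q' \<le> card (g ` (?Q \<times> ?P))"
    by (intro card_mono finite_imageI finite_cartesian_product finite_Q finP)
  also have "\<dots> \<le> card (?Q \<times> ?P)"
    by (intro card_image_le finite_cartesian_product finite_Q finP)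
  also have "\<dots> = card ?Q * card ?P" by (rule card_cartesian_product)
  finally show ?thesis unfolding G'_count_def G_count_def num_classes_def .
qed



theorem proposition1:
  fixes t d :: nat
  assumes "t \<ge> 1" and "d \<ge> 1"
  shows "\<exists>C::real. \<forall>n m :: nat. 1 \<le> m \<and> d * m \<le> n \<and> n \<ge> 2 \<longrightarrow>
     log 2 (real (G'_count t d n (d * m)))
       \<le> log 2 (real (G_count t d n)) + real n * log 2 (real n)
          - (real n - real (d * m)) * log 2 (real n - real (d * m))
          - real (d * m) + C * log 2 (real n)"
proof (intro exI[of _ 3] allI impI)
  fix n m :: nat
  assume nm: "1 \<le> m \<and> d * m \<le> n \<and> n \<ge> 2"
  define k where "k = d * m"
  have k1: "1 \<le> k" and kn: "k \<le> n" and n2: "n \<ge> 2" using nm assms unfolding k_def by auto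
  define F where "F = \<Prod>{n - k + 1..n}"
  have "0 < F" unfolding F_def by (rule prod_pos) auto
  hence Fpos: "F \<ge> 1" by simp
  have pcb: "finite {c. partial_coloring n k c}" "card {c. partial_coloring n k c} \<le> F"
    using pc_card[OF kn] unfolding F_def by auto
  have G1: "G_count t d n \<ge> 1" by (rule G_count_pos)
  have "G'_count t d n k \<le> G_count t d n * card {c. partial_coloring n k c}"
    by (rule count_bound[OF pcb(1)])
  also have "\<dots> \<le> G_count t d n * F" using pcb(2) by simp
  finally have GG: "G'_count t d n k \<le> G_count t d n * F" .
  have GF1: "real (G_count t d n * F) \<ge> 1"
  proof -
    have a: "(1::real) \<le> real (G_count t d n)" using G1 by simp
    have b: "(1::real) \<le> real F" using Fpos by simp
    have "(1::real) * 1 \<le> real (G_count t d n) * real F" using a b by (rule mult_mono) auto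
    thus ?thesis by simp
  qed
  have step1: "log 2 (real (G'_count t d n k)) \<le> log 2 (real (G_count t d n * F))"
  proof (cases "G'_count t d n k = 0")
    case True
    have "0 \<le> log 2 (real (G_count t d n * F))" using GF1 by simp
    moreover have "log 2 (real (G'_count t d n k)) = 0" using True by (simp add: log_def)
    ultimately show ?thesis by simp
  next
    case False
    have "real (G'_count t d n k) \<le> real (G_count t d n * F)" using GG by (simp only: of_nat_le_iff)
    thus ?thesis using False GF1 by (subst log_le_cancel_iff) auto
  qed
  also have "\<dots> = log 2 (real (G_count t d n)) + log 2 (real F)"
    using G1 Fpos by (simp add: log_mult)
  finally have s1: "log 2 (real (G'_count t d n k)) \<le> log 2 (real (G_count t d n)) + log 2 (real F)" .
  define L where "L = ln (2::real)"
  have L0: "0 < L" and L1: "L < 1" unfolding L_def using ln_2_less_1 by auto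
  have Lh: "L \<ge> 1/2"
  proof -
    have "ln (1/2::real) \<le> 1/2 - 1" by (rule ln_le_minus_one) auto
    thus ?thesis unfolding L_def by (simp add: ln_div)
  qed
  define P where "P = real n * ln (real n) - (real n - real k) * ln (real n - real k)"
  have lnF: "ln (real F) \<le> P - real k + ln (real n) + 1"
    using ln_F_bound[OF k1 kn] unfolding F_def P_def by simp
  have lnn: "ln (real n) \<ge> ln 2" using n2 by simp
  have key: "P - real k + ln (real n) + 1 \<le> P - real k * L + 3 * ln (real n)"
  proof -
    have "real k * L \<le> real k" using L1 by (simp add: mult_left_le)
    thus ?thesis using lnn Lh unfolding L_def by linarith
  qed
  have "log 2 (real F) = ln (real F) / L" unfolding L_def by (simp add: log_def)
  also have "\<dots> \<le> (P - real k * L + 3 * ln (real n)) / L"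
    using lnF key L0 by (intro divide_right_mono) auto
  also have "\<dots> = real n * log 2 (real n) - (real n - real k) * log 2 (real n - real k)
          - real k + 3 * log 2 (real n)"
    unfolding P_def L_def log_def using L0 unfolding L_def by (simp add: field_simps)
  finally have s2: "log 2 (real F) \<le> real n * log 2 (real n) - (real n - real k) * log 2 (real n - real k)
          - real k + 3 * log 2 (real n)" .
  show "log 2 (real (G'_count t d n (d * m)))
       \<le> log 2 (real (G_count t d n)) + real n * log 2 (real n)
          - (real n - real (d * m)) * log 2 (real n - real (d * m))
          - real (d * m) + 3 * log 2 (real n)"
    using s1 s2 unfolding k_def by linarith
qed

end
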